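(* Let $\mathcal Q,\mathcal R$ be polynomials in three complex variables. Then $$\mathcal Q(\Lambda^3,\Lambda^7_{1,1},M^8)+\Lambda^5_1\,\mathcal R(\Lambda^3,\Lambda^7_{1,1},M^8)\Big|_{f_1'=0}\equiv0$$ holds identically in $\mathbb C[f_2',f_1'',f_2'',f_1''',f_2''',f_1'''',f_2'''']$ if and only if $\mathcal Q$ and $\mathcal R$ are both identically zero.
   Context: $f_i^{(\lambda)}$ ($i\in\{1,2\}$, $\lambda\ge1$) are independent indeterminates; $\Delta^{\alpha,\beta}:=f_1^{(\alpha)}f_2^{(\beta)}-f_1^{(\beta)}f_2^{(\alpha)}$. $\Lambda^3:=\Delta^{1,2}$; $\Lambda^5_1:=\Delta^{1,3}f_1'-3\Delta^{1,2}f_1''$; $\Lambda^7_{1,1}:=(\Delta^{1,4}+4\Delta^{2,3})(f_1')^2-10\Delta^{1,3}f_1'f_1''+15\Delta^{1,2}(f_1'')^2$; $M^8:=3\Delta^{1,4}\Delta^{1,2}+12\Delta^{2,3}\Delta^{1,2}-5(\Delta^{1,3})^2$. "$|_{f_1'=0}$" means substituting $f_1'=0$. *)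

theory Defs
  imports "HOL-Computational_Algebra.Polynomial" Complex_Main
begin

text \<open>Polynomials in three complex variables x, y, z are represented as nested
univariate polynomials: complex poly poly poly = C[x][y][z].\<close>

definition eval3 :: "complex poly poly poly \<Rightarrow> complex \<Rightarrow> complex \<Rightarrow> complex \<Rightarrow> complex" where
  "eval3 P x y z = poly (map_poly (\<lambda>q. poly (map_poly (\<lambda>p. poly p x) q) y) P) z"

text \<open>f1 k, f2 k stand for the indeterminates f_1^(k), f_2^(k).\<close>

definition Delta :: "(nat \<Rightarrow> complex) \<Rightarrow> (nat \<Rightarrow> complex) \<Rightarrow> nat \<Rightarrow> nat \<Rightarrow> complex" where
  "Delta f1 f2 a b = f1 a * f2 b - f1 b * f2 a"

definition Lam3 :: "(nat \<Rightarrow> complex) \<Rightarrow> (nat \<Rightarrow> complex) \<Rightarrow> complex" where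
  "Lam3 f1 f2 = Delta f1 f2 1 2"

definition Lam5 :: "(nat \<Rightarrow> complex) \<Rightarrow> (nat \<Rightarrow> complex) \<Rightarrow> complex" where
  "Lam5 f1 f2 = Delta f1 f2 1 3 * f1 1 - 3 * Delta f1 f2 1 2 * f1 2"

definition Lam7 :: "(nat \<Rightarrow> complex) \<Rightarrow> (nat \<Rightarrow> complex) \<Rightarrow> complex" where
  "Lam7 f1 f2 = (Delta f1 f2 1 4 + 4 * Delta f1 f2 2 3) * (f1 1)^2
     - 10 * Delta f1 f2 1 3 * f1 1 * f1 2 + 15 * Delta f1 f2 1 2 * (f1 2)^2"

definition M8 :: "(nat \<Rightarrow> complex) \<Rightarrow> (nat \<Rightarrow> complex) \<Rightarrow> complex" where
  "M8 f1 f2 = 3 * Delta f1 f2 1 4 * Delta f1 f2 1 2 + 12 * Delta f1 f2 2 3 * Delta f1 f2 1 2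
     - 5 * (Delta f1 f2 1 3)^2"

end

theory Submission
  imports Defs
begin

lemma vanish1:
  fixes p :: "complex poly"
  assumes "\<And>x. x \<noteq> 0 \<Longrightarrow> poly p x = 0"
  shows "p = 0"
proof (rule ccontr)
  assume "p \<noteq> 0"
  then have "finite {x. poly p x = 0}" by (rule poly_roots_finite)
  moreover have "UNIV - {0} \<subseteq> {x. poly p x = 0}" using assms by auto
  ultimately have "finite (UNIV - {0::complex})" by (rule rev_finite_subset)
  then show False using infinite_UNIV_char_0[where 'a=complex] by simp
qed

lemma coeff_map0: "g 0 = 0 \<Longrightarrow> coeff (map_poly g P) n = g (coeff P n)"
  by (simp add: coeff_map_poly)

lemma vanish3:
  fixes P :: "complex poly poly poly"
  assumes "\<And>x y z. x \<noteq> 0 \<Longrightarrow> y \<noteq> 0 \<Longrightarrow> eval3 P x y z = 0"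
  shows "P = 0"
proof -
  have A: "map_poly (\<lambda>q. poly (map_poly (\<lambda>p. poly p x) q) y) P = 0"
    if "x \<noteq> 0" "y \<noteq> 0" for x y
    by (rule poly_all_0_iff_0[THEN iffD1]) (use assms that in \<open>auto simp: eval3_def\<close>)
  have B: "poly (map_poly (\<lambda>p. poly p x) (coeff P n)) y = 0"
    if "x \<noteq> 0" "y \<noteq> 0" for x y n
    using arg_cong[OF A[OF that], of "\<lambda>r. coeff r n"]
    by (subst (asm) coeff_map0) auto
  have C: "map_poly (\<lambda>p. poly p x) (coeff P n) = 0" if "x \<noteq> 0" for x n
    by (rule vanish1) (use B that in auto)
  have D: "poly (coeff (coeff P n) m) x = 0" if "x \<noteq> 0" for x n m
    using arg_cong[OF C[OF that], of "\<lambda>r. coeff r m"]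
    by (subst (asm) coeff_map0) auto
  have "coeff (coeff P n) m = 0" for n m
    by (rule vanish1) (use D in auto)
  then show ?thesis by (simp add: poly_eq_iff)
qed

lemma special:
  fixes s x z :: complex
  assumes "s \<noteq> 0" "x \<noteq> 0"
  defines "f1 \<equiv> (\<lambda>k::nat. if k = 2 then s else 0)"
  defines "f2 \<equiv> (\<lambda>k::nat. if k = 1 then -x/s else if k = 3 then z/(12*s*x) else 0)"
  shows "f1 1 = 0" "Lam3 f1 f2 = x" "Lam7 f1 f2 = 15*x*s^2" "M8 f1 f2 = z"
        "Lam5 f1 f2 = -3*x*s"
  using assms
  by (auto simp: f1_def f2_def Lam3_def Lam7_def M8_def Lam5_def Delta_def field_simps power2_eq_square)

theorem mainTheorem10:
  fixes Q R :: "complex poly poly poly"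
  shows "(\<forall>f1 f2 :: nat \<Rightarrow> complex. f1 1 = 0 \<longrightarrow>
            eval3 Q (Lam3 f1 f2) (Lam7 f1 f2) (M8 f1 f2)
            + Lam5 f1 f2 * eval3 R (Lam3 f1 f2) (Lam7 f1 f2) (M8 f1 f2) = 0)
         \<longleftrightarrow> (Q = 0 \<and> R = 0)"
proof
  assume H: "\<forall>f1 f2 :: nat \<Rightarrow> complex. f1 1 = 0 \<longrightarrow>
            eval3 Q (Lam3 f1 f2) (Lam7 f1 f2) (M8 f1 f2)
            + Lam5 f1 f2 * eval3 R (Lam3 f1 f2) (Lam7 f1 f2) (M8 f1 f2) = 0"
  have K: "eval3 Q x y z = 0 \<and> eval3 R x y z = 0" if xy: "x \<noteq> 0" "y \<noteq> 0" for x y z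
  proof -
    define s where "s = csqrt (y/(15*x))"
    have s2: "s^2 = y/(15*x)" unfolding s_def by simp
    have s0: "s \<noteq> 0" using s2 xy by auto
    have y: "15*x*s^2 = y" using s2 xy by simp
    have ms0: "-s \<noteq> 0" using s0 by simp
    have E: "eval3 Q x y z + (-3*x*t) * eval3 R x y z = 0" if "t \<noteq> 0" "t^2 = s^2" for t
      using H[rule_format, of "\<lambda>k::nat. if k = 2 then t else 0"
          "\<lambda>k::nat. if k = 1 then -x/t else if k = 3 then z/(12*t*x) else 0"]
      unfolding special(1)[OF that(1) xy(1)] special(2-5)[OF that(1) xy(1), of z] using y that by simp
    have E1: "eval3 Q x y z + (-3*x*s) * eval3 R x y z = 0" using E[OF s0] by simp
    have E2: "eval3 Q x y z + (3*x*s) * eval3 R x y z = 0" using E[OF ms0] by simp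
    from E1 E2 have "(6*x*s) * eval3 R x y z = 0" by algebra
    then have R0: "eval3 R x y z = 0" using s0 xy by simp
    then show ?thesis using E1 by simp
  qed
  show "Q = 0 \<and> R = 0"
    using vanish3[of Q] vanish3[of R] K by blast
next
  assume "Q = 0 \<and> R = 0"
  then show "\<forall>f1 f2 :: nat \<Rightarrow> complex. f1 1 = 0 \<longrightarrow>
            eval3 Q (Lam3 f1 f2) (Lam7 f1 f2) (M8 f1 f2)
            + Lam5 f1 f2 * eval3 R (Lam3 f1 f2) (Lam7 f1 f2) (M8 f1 f2) = 0"
    by (simp add: eval3_def)
qed

end
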